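(* Let $G$ be a group, $A$ a semilattice of groups, $\Theta=(\theta,w)$ a twisted partial action of $G$ on $A$, $\Lambda=\Lambda^\Theta=(\alpha,\lambda,f)$ the corresponding twisted $E(A)*_\theta G$-module structure on $A$, and $\Theta'=\Theta^\Lambda=(\theta',w')$ the twisted partial action of $\mathcal G(E(A)*_\theta G)$ on $A$ coming from $\Lambda$. Then there is an isomorphism $\nu:G\to\mathcal G(E(A)*_\theta G)$ such that $\Theta=\Theta'\circ\nu$, that is, $\theta_x=\theta'_{\nu(x)}$ and $w_{x,y}=w'_{\nu(x),\nu(y)}$ for all $x,y\in G$.
   Context: A semilattice of groups is an inverse semigroup $A$ with central idempotents; $A_e=\{a: aa^{-1}=a^{-1}a=e\}$. Multipliers of a semigroup $T$: pairs $(L,R)$ of maps with $L(st)=L(s)t$, $R(st)=sR(t)$, $sL(t)=R(s)t$, written $ws=L(s)$, $sw=R(s)$; monoid $\mathcal M(T)$, unit group $\mathcal U(\mathcal M(T))$. A twisted partial action of a group $H$ on $A$ is $(\theta,w)$ with isomorphisms $\theta_x:D_{x^{-1}}\to D_x$ of nonempty ideals and $w_{x,y}\in\mathcal U(\mathcal M(D_xD_{xy}))$ with (i) $D_x^2=D_x$, $D_xD_y=D_yD_x$; (ii) $D_1=A$, $\theta_1=\mathrm{id}$; (iii) $\theta_x(D_{x^{-1}}D_y)=D_xD_{xy}$; (iv) $\theta_x\theta_y(s)=w_{x,y}\theta_{xy}(s)w_{x,y}^{-1}$ on $D_{y^{-1}}D_{y^{-1}x^{-1}}$; (v) $w_{1,x}=w_{x,1}$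 = identity of $D_x$; (vi) $\theta_x(sw_{y,z})w_{x,yz}=\theta_x(s)w_{x,y}w_{xy,z}$ on $D_{x^{-1}}D_yD_{yz}$. The $\theta_x$ restrict to a partial action $\theta$ of $G$ on $E(A)$; $E(A)*_\theta G=\{e\delta_x: e\in E(D_x)\}$, $e\delta_x\cdot e'\delta_y=\theta_x(\theta_x^{-1}(e)e')\delta_{xy}$, is an $E$-unitary inverse semigroup; $\mathcal G(\cdot)$ denotes the maximum group image (quotient by the minimum group congruence $\sigma$). $\Lambda^\Theta=(\alpha,\lambda,f)$: $\alpha(e\delta_1)=e$, $\lambda_{e\delta_x}(a)=\theta_x(\theta_x^{-1}(e)a)$, $f(e\delta_x,e'\delta_y)=\theta_x(\theta_x^{-1}(e)e')w_{x,y}$; it is a Sieben twisted module structure (i.e. $\alpha:E(S)\to E(A)$ an isomorphism, $\lambda_s$ endomorphisms, $f(s,t)\in A_{\alpha(stt^{-1}s^{-1})}$, and $f(s,e)=\alpha(ses^{-1})$, $f(e,s)=\alpha(ess^{-1})$ for idempotents $e$, among the twisted-module axioms). For a Sieben structure $(\alpha,\lambda,f)$ over an $E$-unitary $S$, $\Theta^\Lambda=(\theta',w')$ is: $D'_X=\bigsqcup_{s\in X}A_{\alpha(ss^{-1})}$ for $X\in\mathcal G(S)$; $\theta'_X(a)=\lambda_s(a)$ for $a\in D'_{X^{-1}}$, $s\in X$ unique with $\alpha(s^{-1}s)=aa^{-1}$; $w'_{X,Y}a=f(s,s^{-1}t)a$, $aw'_{X,Y}=af(s,s^{-1}t)$ for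 $a\in D'_XD'_{XY}$, $s\in X$, $t\in XY$ unique with $\alpha(ss^{-1})=\alpha(tt^{-1})=aa^{-1}$. *)

theory Defs
  imports "HOL-Algebra.Group"
begin

definition setmul :: "('a \<Rightarrow> 'a \<Rightarrow> 'a) \<Rightarrow> 'a set \<Rightarrow> 'a set \<Rightarrow> 'a set" where
  "setmul m X Y = {m a b | a b. a \<in> X \<and> b \<in> Y}"

definition inverse_semigroup :: "'a set \<Rightarrow> ('a \<Rightarrow> 'a \<Rightarrow> 'a) \<Rightarrow> bool" where
  "inverse_semigroup A m \<longleftrightarrow>
     (\<forall>a\<in>A. \<forall>b\<in>A. m a b \<in> A) \<and>
     (\<forall>a\<in>A. \<forall>b\<in>A. \<forall>c\<in>A. m (m a b) c = m a (m b c)) \<and>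
     (\<forall>a\<in>A. \<exists>!b. b \<in> A \<and> m (m a b) a = a \<and> m (m b a) b = b)"

definition sinv :: "'a set \<Rightarrow> ('a \<Rightarrow> 'a \<Rightarrow> 'a) \<Rightarrow> 'a \<Rightarrow> 'a" where
  "sinv A m a = (THE b. b \<in> A \<and> m (m a b) a = a \<and> m (m b a) b = b)"

definition idems :: "'a set \<Rightarrow> ('a \<Rightarrow> 'a \<Rightarrow> 'a) \<Rightarrow> 'a set" where
  "idems A m = {e \<in> A. m e e = e}"

definition semilattice_of_groups :: "'a set \<Rightarrow> ('a \<Rightarrow> 'a \<Rightarrow> 'a) \<Rightarrow> bool" where
  "semilattice_of_groups A m \<longleftrightarrow> inverse_semigroup A m \<and>
     (\<forall>e\<in>idems A m. \<forall>a\<in>A. m e a = m a e)"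

definition comp_grp :: "'a set \<Rightarrow> ('a \<Rightarrow> 'a \<Rightarrow> 'a) \<Rightarrow> 'a \<Rightarrow> 'a set" where
  "comp_grp A m e = {a \<in> A. m a (sinv A m a) = e \<and> m (sinv A m a) a = e}"

definition is_ideal :: "'a set \<Rightarrow> ('a \<Rightarrow> 'a \<Rightarrow> 'a) \<Rightarrow> 'a set \<Rightarrow> bool" where
  "is_ideal A m I \<longleftrightarrow> I \<noteq> {} \<and> I \<subseteq> A \<and> (\<forall>a\<in>A. \<forall>b\<in>I. m a b \<in> I \<and> m b a \<in> I)"

definition semigroup_iso :: "('a \<Rightarrow> 'a \<Rightarrow> 'a) \<Rightarrow> ('a \<Rightarrow> 'a) \<Rightarrow> 'a set \<Rightarrow> 'a set \<Rightarrow> bool" where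
  "semigroup_iso m h I J \<longleftrightarrow> bij_betw h I J \<and> (\<forall>a\<in>I. \<forall>b\<in>I. h (m a b) = m (h a) (h b))"

text \<open>A multiplier $w$ of $T$ is a pair $(L,R)$; $w s = L s$, $s w = R s$.\<close>
type_synonym 'a multiplier = "('a \<Rightarrow> 'a) \<times> ('a \<Rightarrow> 'a)"

definition is_multiplier :: "'a set \<Rightarrow> ('a \<Rightarrow> 'a \<Rightarrow> 'a) \<Rightarrow> 'a multiplier \<Rightarrow> bool" where
  "is_multiplier T m w \<longleftrightarrow>
     (\<forall>s\<in>T. fst w s \<in> T \<and> snd w s \<in> T) \<and>
     (\<forall>s\<in>T. \<forall>t\<in>T. fst w (m s t) = m (fst w s) t \<and> snd w (m s t) = m s (snd w t)
                    \<and> m s (fst w t) = m (snd w s) t)"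

text \<open>Product in $\mathcal M(T)$: $(w w') s = w (w' s)$, $s (w w') = (s w) w'$.\<close>
definition mult_comp :: "'a multiplier \<Rightarrow> 'a multiplier \<Rightarrow> 'a multiplier" where
  "mult_comp w v = (fst w \<circ> fst v, snd v \<circ> snd w)"

definition mult_eq_on :: "'a set \<Rightarrow> 'a multiplier \<Rightarrow> 'a multiplier \<Rightarrow> bool" where
  "mult_eq_on T w v \<longleftrightarrow> (\<forall>s\<in>T. fst w s = fst v s \<and> snd w s = snd v s)"

definition mult_is_inverse :: "'a set \<Rightarrow> ('a \<Rightarrow> 'a \<Rightarrow> 'a) \<Rightarrow> 'a multiplier \<Rightarrow> 'a multiplier \<Rightarrow> bool" where
  "mult_is_inverse T m w v \<longleftrightarrow> is_multiplier T m v \<and>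
     mult_eq_on T (mult_comp w v) (id, id) \<and> mult_eq_on T (mult_comp v w) (id, id)"

definition is_unit_multiplier :: "'a set \<Rightarrow> ('a \<Rightarrow> 'a \<Rightarrow> 'a) \<Rightarrow> 'a multiplier \<Rightarrow> bool" where
  "is_unit_multiplier T m w \<longleftrightarrow> is_multiplier T m w \<and> (\<exists>v. mult_is_inverse T m w v)"

definition mult_inv :: "'a set \<Rightarrow> ('a \<Rightarrow> 'a \<Rightarrow> 'a) \<Rightarrow> 'a multiplier \<Rightarrow> 'a multiplier" where
  "mult_inv T m w = (SOME v. mult_is_inverse T m w v)"

definition twisted_partial_action ::
  "('g, 'b) monoid_scheme \<Rightarrow> 'a set \<Rightarrow> ('a \<Rightarrow> 'a \<Rightarrow> 'a) \<Rightarrow>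
   ('g \<Rightarrow> 'a set) \<Rightarrow> ('g \<Rightarrow> 'a \<Rightarrow> 'a) \<Rightarrow> ('g \<Rightarrow> 'g \<Rightarrow> 'a multiplier) \<Rightarrow> bool" where
  "twisted_partial_action H A m D \<theta> w \<longleftrightarrow>
     (\<forall>x\<in>carrier H. is_ideal A m (D x)) \<and>
     (\<forall>x\<in>carrier H. semigroup_iso m (\<theta> x) (D (inv\<^bsub>H\<^esub> x)) (D x)) \<and>
     (\<forall>x\<in>carrier H. \<forall>y\<in>carrier H.
        is_unit_multiplier (setmul m (D x) (D (x \<otimes>\<^bsub>H\<^esub> y))) m (w x y)) \<and>
     \<comment> \<open>(i)\<close>
     (\<forall>x\<in>carrier H. setmul m (D x) (D x) = D x) \<and>
     (\<forall>x\<in>carrier H. \<forall>y\<in>carrier H. setmul m (D x) (D y) = setmul m (D y) (D x)) \<and>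
     \<comment> \<open>(ii)\<close>
     D \<one>\<^bsub>H\<^esub> = A \<and> (\<forall>a\<in>A. \<theta> \<one>\<^bsub>H\<^esub> a = a) \<and>
     \<comment> \<open>(iii)\<close>
     (\<forall>x\<in>carrier H. \<forall>y\<in>carrier H.
        \<theta> x ` setmul m (D (inv\<^bsub>H\<^esub> x)) (D y) = setmul m (D x) (D (x \<otimes>\<^bsub>H\<^esub> y))) \<and>
     \<comment> \<open>(iv)\<close>
     (\<forall>x\<in>carrier H. \<forall>y\<in>carrier H.
        \<forall>s\<in>setmul m (D (inv\<^bsub>H\<^esub> y)) (D (inv\<^bsub>H\<^esub> y \<otimes>\<^bsub>H\<^esub> inv\<^bsub>H\<^esub> x)).
          \<theta> x (\<theta> y s) =
            fst (w x y) (snd (mult_inv (setmul m (D x) (D (x \<otimes>\<^bsub>H\<^esub> y))) m (w x y))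
                          (\<theta> (x \<otimes>\<^bsub>H\<^esub> y) s))) \<and>
     \<comment> \<open>(v)\<close>
     (\<forall>x\<in>carrier H. mult_eq_on (D x) (w \<one>\<^bsub>H\<^esub> x) (id, id) \<and>
                    mult_eq_on (D x) (w x \<one>\<^bsub>H\<^esub>) (id, id)) \<and>
     \<comment> \<open>(vi)\<close>
     (\<forall>x\<in>carrier H. \<forall>y\<in>carrier H. \<forall>z\<in>carrier H.
        \<forall>s\<in>setmul m (setmul m (D (inv\<^bsub>H\<^esub> x)) (D y)) (D (y \<otimes>\<^bsub>H\<^esub> z)).
          snd (w x (y \<otimes>\<^bsub>H\<^esub> z)) (\<theta> x (snd (w y z) s)) =
          snd (w (x \<otimes>\<^bsub>H\<^esub> y) z) (snd (w x y) (\<theta> x s)))"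

definition theta_inv :: "('g, 'b) monoid_scheme \<Rightarrow> ('g \<Rightarrow> 'a set) \<Rightarrow> ('g \<Rightarrow> 'a \<Rightarrow> 'a) \<Rightarrow> 'g \<Rightarrow> 'a \<Rightarrow> 'a" where
  "theta_inv H D \<theta> x = inv_into (D (inv\<^bsub>H\<^esub> x)) (\<theta> x)"

text \<open>Elements $e\delta_x$ are represented as pairs $(e,x)$.\<close>
definition crossed_carrier :: "('g, 'b) monoid_scheme \<Rightarrow> 'a set \<Rightarrow> ('a \<Rightarrow> 'a \<Rightarrow> 'a) \<Rightarrow> ('g \<Rightarrow> 'a set) \<Rightarrow> ('a \<times> 'g) set" where
  "crossed_carrier H A m D = {(e, x). x \<in> carrier H \<and> e \<in> idems (D x) m}"

definition crossed_mult :: "('g, 'b) monoid_scheme \<Rightarrow> ('a \<Rightarrow> 'a \<Rightarrow> 'a) \<Rightarrow> ('g \<Rightarrow> 'a set) \<Rightarrow> ('g \<Rightarrow> 'a \<Rightarrow> 'a)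
    \<Rightarrow> 'a \<times> 'g \<Rightarrow> 'a \<times> 'g \<Rightarrow> 'a \<times> 'g" where
  "crossed_mult H m D \<theta> s t =
     (\<theta> (snd s) (m (theta_inv H D \<theta> (snd s) (fst s)) (fst t)), snd s \<otimes>\<^bsub>H\<^esub> snd t)"

definition sg_congruence :: "'s set \<Rightarrow> ('s \<Rightarrow> 's \<Rightarrow> 's) \<Rightarrow> ('s \<times> 's) set \<Rightarrow> bool" where
  "sg_congruence S m \<rho> \<longleftrightarrow> equiv S \<rho> \<and>
     (\<forall>(s, t)\<in>\<rho>. \<forall>u\<in>S. (m s u, m t u) \<in> \<rho> \<and> (m u s, m u t) \<in> \<rho>)"

definition quot_monoid :: "'s set \<Rightarrow> ('s \<Rightarrow> 's \<Rightarrow> 's) \<Rightarrow> ('s \<times> 's) set \<Rightarrow> 's set monoid" where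
  "quot_monoid S m \<rho> =
     \<lparr> carrier = S // \<rho>,
       mult = (\<lambda>X Y. \<rho> `` {m (SOME s. s \<in> X) (SOME t. t \<in> Y)}),
       one = \<rho> `` {SOME e. e \<in> idems S m} \<rparr>"

definition group_congruence :: "'s set \<Rightarrow> ('s \<Rightarrow> 's \<Rightarrow> 's) \<Rightarrow> ('s \<times> 's) set \<Rightarrow> bool" where
  "group_congruence S m \<rho> \<longleftrightarrow> sg_congruence S m \<rho> \<and> group (quot_monoid S m \<rho>)"

definition min_group_congruence :: "'s set \<Rightarrow> ('s \<Rightarrow> 's \<Rightarrow> 's) \<Rightarrow> ('s \<times> 's) set" where
  "min_group_congruence S m = \<Inter> {\<rho>. group_congruence S m \<rho>}"

definition max_group_image :: "'s set \<Rightarrow> ('s \<Rightarrow> 's \<Rightarrow> 's) \<Rightarrow> 's set monoid" where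
  "max_group_image S m = quot_monoid S m (min_group_congruence S m)"

section \<open>From a twisted module structure to a twisted partial action: $\Theta^\Lambda$\<close>

definition TL_dom :: "'s set \<Rightarrow> ('s \<Rightarrow> 's \<Rightarrow> 's) \<Rightarrow> 'a set \<Rightarrow> ('a \<Rightarrow> 'a \<Rightarrow> 'a) \<Rightarrow> ('s \<Rightarrow> 'a)
    \<Rightarrow> 's set \<Rightarrow> 'a set" where
  "TL_dom S Sm A m \<alpha> X = (\<Union>s\<in>X. comp_grp A m (\<alpha> (Sm s (sinv S Sm s))))"

definition TL_theta :: "'s set \<Rightarrow> ('s \<Rightarrow> 's \<Rightarrow> 's) \<Rightarrow> 'a set \<Rightarrow> ('a \<Rightarrow> 'a \<Rightarrow> 'a) \<Rightarrow> ('s \<Rightarrow> 'a)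
    \<Rightarrow> ('s \<Rightarrow> 'a \<Rightarrow> 'a) \<Rightarrow> 's set \<Rightarrow> 'a \<Rightarrow> 'a" where
  "TL_theta S Sm A m \<alpha> lam X a =
     lam (THE s. s \<in> X \<and> \<alpha> (Sm (sinv S Sm s) s) = m a (sinv A m a)) a"

definition TL_w :: "'s set \<Rightarrow> ('s \<Rightarrow> 's \<Rightarrow> 's) \<Rightarrow> 'a set \<Rightarrow> ('a \<Rightarrow> 'a \<Rightarrow> 'a) \<Rightarrow> ('s \<Rightarrow> 'a)
    \<Rightarrow> ('s \<Rightarrow> 's \<Rightarrow> 'a) \<Rightarrow> 's set \<Rightarrow> 's set \<Rightarrow> 'a multiplier" where
  "TL_w S Sm A m \<alpha> f X Y =
     (let GS = max_group_image S Sm;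
          sel = (\<lambda>Z a. THE s. s \<in> Z \<and> \<alpha> (Sm s (sinv S Sm s)) = m a (sinv A m a));
          coef = (\<lambda>a. f (sel X a) (Sm (sinv S Sm (sel X a)) (sel (X \<otimes>\<^bsub>GS\<^esub> Y) a)))
      in (\<lambda>a. m (coef a) a, \<lambda>a. m a (coef a)))"

section \<open>From a twisted partial action to a twisted module structure: $\Lambda^\Theta$\<close>

definition LT_alpha :: "'a \<times> 'g \<Rightarrow> 'a" where
  "LT_alpha s = fst s"

definition LT_lambda :: "('g, 'b) monoid_scheme \<Rightarrow> ('a \<Rightarrow> 'a \<Rightarrow> 'a) \<Rightarrow> ('g \<Rightarrow> 'a set) \<Rightarrow> ('g \<Rightarrow> 'a \<Rightarrow> 'a)
    \<Rightarrow> 'a \<times> 'g \<Rightarrow> 'a \<Rightarrow> 'a" where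
  "LT_lambda H m D \<theta> s a = \<theta> (snd s) (m (theta_inv H D \<theta> (snd s) (fst s)) a)"

definition LT_f :: "('g, 'b) monoid_scheme \<Rightarrow> ('a \<Rightarrow> 'a \<Rightarrow> 'a) \<Rightarrow> ('g \<Rightarrow> 'a set) \<Rightarrow> ('g \<Rightarrow> 'a \<Rightarrow> 'a)
    \<Rightarrow> ('g \<Rightarrow> 'g \<Rightarrow> 'a multiplier) \<Rightarrow> 'a \<times> 'g \<Rightarrow> 'a \<times> 'g \<Rightarrow> 'a" where
  "LT_f H m D \<theta> w s t =
     snd (w (snd s) (snd t)) (\<theta> (snd s) (m (theta_inv H D \<theta> (snd s) (fst s)) (fst t)))"

end

theory Submission imports Defs begin

locale tpa =
  fixes G :: "('g, 'b) monoid_scheme"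
    and A :: "'a set" and m :: "'a \<Rightarrow> 'a \<Rightarrow> 'a"
    and D :: "'g \<Rightarrow> 'a set" and \<theta> :: "'g \<Rightarrow> 'a \<Rightarrow> 'a"
    and w :: "'g \<Rightarrow> 'g \<Rightarrow> 'a multiplier"
  assumes grp: "group G"
    and slg: "semilattice_of_groups A m"
    and tpa: "twisted_partial_action G A m D \<theta> w"
begin

interpretation G: group G by (rule grp)

lemma closed: "a \<in> A \<Longrightarrow> b \<in> A \<Longrightarrow> m a b \<in> A"
  using slg unfolding semilattice_of_groups_def inverse_semigroup_def by blast
lemma assoc: "a \<in> A \<Longrightarrow> b \<in> A \<Longrightarrow> c \<in> A \<Longrightarrow> m (m a b) c = m a (m b c)"
  using slg unfolding semilattice_of_groups_def inverse_semigroup_def by blast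
lemma central: "e \<in> A \<Longrightarrow> m e e = e \<Longrightarrow> a \<in> A \<Longrightarrow> m e a = m a e"
  using slg unfolding semilattice_of_groups_def idems_def by blast

lemma sinv_props:
  assumes "a \<in> A"
  shows "sinv A m a \<in> A" "m (m a (sinv A m a)) a = a" "m (m (sinv A m a) a) (sinv A m a) = sinv A m a"
proof -
  have "\<exists>!b. b \<in> A \<and> m (m a b) a = a \<and> m (m b a) b = b"
    using slg assms unfolding semilattice_of_groups_def inverse_semigroup_def by blast
  from theI'[OF this] show "sinv A m a \<in> A" "m (m a (sinv A m a)) a = a" "m (m (sinv A m a) a) (sinv A m a) = sinv A m a"
    unfolding sinv_def by auto
qed

lemma aa'_idem: "a \<in> A \<Longrightarrow> m (m a (sinv A m a)) (m a (sinv A m a)) = m a (sinv A m a)"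
  by (metis assoc closed sinv_props)

lemma aa'_eq: "a \<in> A \<Longrightarrow> m (sinv A m a) a = m a (sinv A m a)"
proof -
  assume a: "a \<in> A"
  let ?b = "sinv A m a"
  let ?e = "m a ?b" and ?f = "m ?b a"
  have b: "?b \<in> A" using sinv_props a by auto
  have eA: "?e \<in> A" and fA: "?f \<in> A" using a b closed by auto
  have aba: "m (m a ?b) a = a" using sinv_props(2)[OF a] .
  have bab: "m (m ?b a) ?b = ?b" using sinv_props(3)[OF a] .
  have ei: "m ?e ?e = ?e"
  proof -
    have "m ?e ?e = m (m ?e a) ?b" using assoc[OF eA a b] by simp
    thus ?thesis using aba by simp
  qed
  have fi: "m ?f ?f = ?f"
  proof -
    have "m ?f ?f = m (m ?f ?b) a" using assoc[OF fA b a] by simp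
    thus ?thesis using bab by simp
  qed
  have af: "m a ?f = a" using aba assoc[OF a b a] by simp
  have ea: "m ?e a = a" using aba .
  have "m ?f ?e = m (m ?f a) ?b" using assoc[OF fA a b] by simp
  also have "m ?f a = m a ?f" using central[OF fA fi a] .
  finally have e1: "m ?f ?e = ?e" using af by simp
  have "m ?f ?e = m ?b (m a ?e)" using assoc[OF b a eA] by simp
  also have "m a ?e = m ?e a" using central[OF eA ei a] by simp
  finally have f1: "m ?f ?e = ?f" using ea by simp
  from e1 f1 show ?thesis by simp
qed

lemma tp: "twisted_partial_action G A m D \<theta> w" by (rule tpa)

lemmas tpc = tpa[unfolded twisted_partial_action_def]

lemma ideal: "x \<in> carrier G \<Longrightarrow> is_ideal A m (D x)"
  using tpc[THEN conjunct1] by blast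
lemma DsubA: "x \<in> carrier G \<Longrightarrow> D x \<subseteq> A"
  using ideal unfolding is_ideal_def by blast
lemma Dne: "x \<in> carrier G \<Longrightarrow> D x \<noteq> {}"
  using ideal unfolding is_ideal_def by blast
lemma Dl: "x \<in> carrier G \<Longrightarrow> a \<in> A \<Longrightarrow> b \<in> D x \<Longrightarrow> m a b \<in> D x"
  using ideal unfolding is_ideal_def by blast
lemma Dr: "x \<in> carrier G \<Longrightarrow> a \<in> A \<Longrightarrow> b \<in> D x \<Longrightarrow> m b a \<in> D x"
  using ideal unfolding is_ideal_def by blast
lemma D1: "D \<one>\<^bsub>G\<^esub> = A"
  using tpc[THEN conjunct2, THEN conjunct2, THEN conjunct2, THEN conjunct2, THEN conjunct2, THEN conjunct1] by blast
lemma th1: "a \<in> A \<Longrightarrow> \<theta> \<one>\<^bsub>G\<^esub> a = a"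
  using tpc[THEN conjunct2, THEN conjunct2, THEN conjunct2, THEN conjunct2, THEN conjunct2, THEN conjunct2, THEN conjunct1] by blast
lemma th_iso: "x \<in> carrier G \<Longrightarrow> semigroup_iso m (\<theta> x) (D (inv\<^bsub>G\<^esub> x)) (D x)"
  using tpc[THEN conjunct2, THEN conjunct1] by blast
lemma th_bij: "x \<in> carrier G \<Longrightarrow> bij_betw (\<theta> x) (D (inv\<^bsub>G\<^esub> x)) (D x)"
  using th_iso unfolding semigroup_iso_def by blast
lemma th_in: "x \<in> carrier G \<Longrightarrow> a \<in> D (inv\<^bsub>G\<^esub> x) \<Longrightarrow> \<theta> x a \<in> D x"
  using th_bij bij_betwE by blast
lemma th_inj: "x \<in> carrier G \<Longrightarrow> inj_on (\<theta> x) (D (inv\<^bsub>G\<^esub> x))"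
  using th_bij bij_betw_def by blast
lemma th_hom: "x \<in> carrier G \<Longrightarrow> a \<in> D (inv\<^bsub>G\<^esub> x) \<Longrightarrow> b \<in> D (inv\<^bsub>G\<^esub> x) \<Longrightarrow>
   \<theta> x (m a b) = m (\<theta> x a) (\<theta> x b)"
  using th_iso unfolding semigroup_iso_def by blast
lemma unit: "x \<in> carrier G \<Longrightarrow> y \<in> carrier G \<Longrightarrow>
   is_unit_multiplier (setmul m (D x) (D (x \<otimes>\<^bsub>G\<^esub> y))) m (w x y)"
  using tpc[THEN conjunct2, THEN conjunct2, THEN conjunct1] by blast
lemma iii: "x \<in> carrier G \<Longrightarrow> y \<in> carrier G \<Longrightarrow>
   \<theta> x ` setmul m (D (inv\<^bsub>G\<^esub> x)) (D y) = setmul m (D x) (D (x \<otimes>\<^bsub>G\<^esub> y))"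
  using tpc[THEN conjunct2, THEN conjunct2, THEN conjunct2, THEN conjunct2, THEN conjunct2, THEN conjunct2, THEN conjunct2, THEN conjunct1] by blast
lemma iv: "x \<in> carrier G \<Longrightarrow> y \<in> carrier G \<Longrightarrow>
   s \<in> setmul m (D (inv\<^bsub>G\<^esub> y)) (D (inv\<^bsub>G\<^esub> y \<otimes>\<^bsub>G\<^esub> inv\<^bsub>G\<^esub> x)) \<Longrightarrow>
          \<theta> x (\<theta> y s) =
            fst (w x y) (snd (mult_inv (setmul m (D x) (D (x \<otimes>\<^bsub>G\<^esub> y))) m (w x y))
                          (\<theta> (x \<otimes>\<^bsub>G\<^esub> y) s))"
  using tpc[THEN conjunct2, THEN conjunct2, THEN conjunct2, THEN conjunct2, THEN conjunct2, THEN conjunct2, THEN conjunct2, THEN conjunct2, THEN conjunct1] by blast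

lemma thinv: "x \<in> carrier G \<Longrightarrow> b \<in> D x \<Longrightarrow>
   theta_inv G D \<theta> x b \<in> D (inv\<^bsub>G\<^esub> x) \<and> \<theta> x (theta_inv G D \<theta> x b) = b"
  unfolding theta_inv_def using th_bij
  by (metis bij_betw_imp_surj_on f_inv_into_f inv_into_into)
lemma thinv_f: "x \<in> carrier G \<Longrightarrow> a \<in> D (inv\<^bsub>G\<^esub> x) \<Longrightarrow> theta_inv G D \<theta> x (\<theta> x a) = a"
  unfolding theta_inv_def using th_inj by (metis inv_into_f_f)
lemma thinv1: "a \<in> A \<Longrightarrow> theta_inv G D \<theta> \<one>\<^bsub>G\<^esub> a = a"
  using thinv_f[of "\<one>\<^bsub>G\<^esub>" a] th1 D1 by simp

lemma setmul_sub: "X \<subseteq> A \<Longrightarrow> Y \<subseteq> A \<Longrightarrow> setmul m X Y \<subseteq> A"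
  unfolding setmul_def using closed by blast
lemma setmulI: "a \<in> X \<Longrightarrow> b \<in> Y \<Longrightarrow> m a b \<in> setmul m X Y"
  unfolding setmul_def by blast

lemma LeqR:
  assumes "is_multiplier T m v" "T \<subseteq> A" "e \<in> T" "m e e = e"
  shows "fst v e = snd v e"
proof -
  have inT: "fst v e \<in> T" "snd v e \<in> T" using assms unfolding is_multiplier_def by auto
  have 1: "fst v e = m (fst v e) e" using assms unfolding is_multiplier_def by metis
  have 2: "m e (fst v e) = m (snd v e) e" using assms unfolding is_multiplier_def by metis
  have 3: "snd v e = m e (snd v e)" using assms unfolding is_multiplier_def by metis
  have eA: "e \<in> A" using assms by auto
  have "fst v e = m e (fst v e)" using 1 central[OF eA assms(4)] inT assms(2) by auto
  also have "\<dots> = m e (snd v e)" using 2 central[OF eA assms(4)] inT assms(2) by auto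
  finally show ?thesis using 3 by simp
qed

lemma ginv: "x \<in> carrier G \<Longrightarrow> inv\<^bsub>G\<^esub> x \<in> carrier G" by simp

lemma conj_idem:
  assumes x: "x \<in> carrier G" and e: "e \<in> D x" "m e e = e"
  shows "\<theta> x (\<theta> (inv\<^bsub>G\<^esub> x) e) = e"
proof -
  let ?T = "setmul m (D x) (D (x \<otimes>\<^bsub>G\<^esub> inv\<^bsub>G\<^esub> x))"
  have TA: "?T = setmul m (D x) A" using x D1 by simp
  have eA: "e \<in> A" using e DsubA x by auto
  have eT: "e \<in> ?T" using TA setmulI[OF e(1) eA] e by simp
  have TsA: "?T \<subseteq> A" using TA setmul_sub DsubA x by auto
  have "e \<in> setmul m (D (inv\<^bsub>G\<^esub> (inv\<^bsub>G\<^esub> x))) (D (inv\<^bsub>G\<^esub> (inv\<^bsub>G\<^esub> x) \<otimes>\<^bsub>G\<^esub> inv\<^bsub>G\<^esub> x))"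
    using eT x by simp
  from iv[OF x ginv[OF x] this]
  have eq: "\<theta> x (\<theta> (inv\<^bsub>G\<^esub> x) e) = fst (w x (inv\<^bsub>G\<^esub> x)) (snd (mult_inv ?T m (w x (inv\<^bsub>G\<^esub> x))) e)"
    using x th1 eA by simp
  have "\<exists>v. mult_is_inverse ?T m (w x (inv\<^bsub>G\<^esub> x)) v"
    using unit[OF x ginv[OF x]] unfolding is_unit_multiplier_def by blast
  hence vi: "mult_is_inverse ?T m (w x (inv\<^bsub>G\<^esub> x)) (mult_inv ?T m (w x (inv\<^bsub>G\<^esub> x)))"
    unfolding mult_inv_def by (rule someI_ex)
  let ?v = "mult_inv ?T m (w x (inv\<^bsub>G\<^esub> x))"
  have vm: "is_multiplier ?T m ?v" using vi unfolding mult_is_inverse_def by blast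
  have "fst (w x (inv\<^bsub>G\<^esub> x)) (fst ?v e) = e"
    using vi eT unfolding mult_is_inverse_def mult_eq_on_def mult_comp_def by auto
  moreover have "fst ?v e = snd ?v e" using LeqR[OF vm TsA eT e(2)] .
  ultimately show ?thesis using eq by simp
qed

lemma thinv_idem:
  assumes x: "x \<in> carrier G" and e: "e \<in> D x" "m e e = e"
  shows "theta_inv G D \<theta> x e = \<theta> (inv\<^bsub>G\<^esub> x) e"
proof -
  have "\<theta> (inv\<^bsub>G\<^esub> x) e \<in> D (inv\<^bsub>G\<^esub> x)" using th_in[OF ginv[OF x]] e x by simp
  thus ?thesis using thinv_f[OF x] conj_idem[OF x e] by metis
qed


abbreviation "S \<equiv> crossed_carrier G A m D"
abbreviation "Sm \<equiv> crossed_mult G m D \<theta>"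
abbreviation "ti \<equiv> theta_inv G D \<theta>"

lemma S_mem: "(e, x) \<in> S \<longleftrightarrow> x \<in> carrier G \<and> e \<in> D x \<and> m e e = e"
  unfolding crossed_carrier_def idems_def by auto
lemma Sm_simp: "Sm (e, x) (f, y) = (\<theta> x (m (ti x e) f), x \<otimes>\<^bsub>G\<^esub> y)"
  unfolding crossed_mult_def by simp

lemma DA: "x \<in> carrier G \<Longrightarrow> e \<in> D x \<Longrightarrow> e \<in> A" using DsubA by auto

lemma ti_idem:
  assumes x: "x \<in> carrier G" and e: "e \<in> D x" "m e e = e"
  shows "ti x e \<in> D (inv\<^bsub>G\<^esub> x)" "m (ti x e) (ti x e) = ti x e" "\<theta> x (ti x e) = e"
proof -
  show u: "ti x e \<in> D (inv\<^bsub>G\<^esub> x)" "\<theta> x (ti x e) = e" using thinv[OF x e(1)] by auto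
  have "m (ti x e) (ti x e) \<in> D (inv\<^bsub>G\<^esub> x)" using Dl[OF ginv[OF x] DA[OF ginv[OF x] u(1)] u(1)] .
  moreover have "\<theta> x (m (ti x e) (ti x e)) = \<theta> x (ti x e)" using th_hom[OF x u(1) u(1)] u(2) e(2) by simp
  ultimately show "m (ti x e) (ti x e) = ti x e" using th_inj[OF x] u(1) by (meson inj_onD)
qed

lemma idem_mult: "e \<in> A \<Longrightarrow> m e e = e \<Longrightarrow> f \<in> A \<Longrightarrow> m f f = f \<Longrightarrow> m (m e f) (m e f) = m e f"
  by (metis assoc central closed)

lemma S_closed:
  assumes "(e, x) \<in> S" "(f, y) \<in> S"
  shows "Sm (e, x) (f, y) \<in> S"
proof -
  have x: "x \<in> carrier G" and e: "e \<in> D x" "m e e = e" and y: "y \<in> carrier G"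
    and f: "f \<in> D y" "m f f = f" using assms S_mem by auto
  note u = ti_idem[OF x e]
  have uf: "m (ti x e) f \<in> setmul m (D (inv\<^bsub>G\<^esub> x)) (D y)" using setmulI u(1) f(1) by blast
  have ufD: "m (ti x e) f \<in> D (inv\<^bsub>G\<^esub> x)" using Dr[OF ginv[OF x] DA[OF y f(1)] u(1)] .
  have "\<theta> x (m (ti x e) f) \<in> setmul m (D x) (D (x \<otimes>\<^bsub>G\<^esub> y))" using iii[OF x y] uf by blast
  hence inD: "\<theta> x (m (ti x e) f) \<in> D (x \<otimes>\<^bsub>G\<^esub> y)"
    unfolding setmul_def using Dl x y DA by auto
  have ufi: "m (m (ti x e) f) (m (ti x e) f) = m (ti x e) f"
    using idem_mult u DA[OF ginv[OF x]] DA[OF y] f by auto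
  have "m (\<theta> x (m (ti x e) f)) (\<theta> x (m (ti x e) f)) = \<theta> x (m (ti x e) f)"
    using th_hom[OF x ufD ufD] ufi by simp
  thus ?thesis using inD x y S_mem Sm_simp by auto
qed

lemma Sm_one: "e \<in> A \<Longrightarrow> x \<in> carrier G \<Longrightarrow> f \<in> D x \<Longrightarrow> Sm (e, \<one>\<^bsub>G\<^esub>) (f, x) = (m e f, x)"
  using Sm_simp thinv1 th1 closed DA by simp

lemma sinv_S:
  assumes s: "(e, x) \<in> S"
  shows "sinv S Sm (e, x) = (ti x e, inv\<^bsub>G\<^esub> x)"
proof -
  have x: "x \<in> carrier G" and e: "e \<in> D x" "m e e = e" using s S_mem by auto
  note u = ti_idem[OF x e]
  have ix: "inv\<^bsub>G\<^esub> x \<in> carrier G" using x by simp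
  have eA: "e \<in> A" using DA x e by auto
  have uA: "ti x e \<in> A" using DA ix u by auto
  have tie: "ti x e = \<theta> (inv\<^bsub>G\<^esub> x) e" using thinv_idem[OF x e] .
  have tiinv: "ti (inv\<^bsub>G\<^esub> x) (ti x e) = e" using tie thinv_f[OF ix] e x by simp
  have sb: "Sm (e, x) (ti x e, inv\<^bsub>G\<^esub> x) = (e, \<one>\<^bsub>G\<^esub>)"
    using Sm_simp u x by simp
  have bs: "Sm (ti x e, inv\<^bsub>G\<^esub> x) (e, x) = (ti x e, \<one>\<^bsub>G\<^esub>)"
    using Sm_simp x tiinv e tie by simp
  have c1: "Sm (Sm (e, x) (ti x e, inv\<^bsub>G\<^esub> x)) (e, x) = (e, x)"
    using sb Sm_one[OF eA x e(1)] e by simp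
  have c2: "Sm (Sm (ti x e, inv\<^bsub>G\<^esub> x) (e, x)) (ti x e, inv\<^bsub>G\<^esub> x) = (ti x e, inv\<^bsub>G\<^esub> x)"
    using bs Sm_one[OF uA ix u(1)] u by simp
  have cS: "(ti x e, inv\<^bsub>G\<^esub> x) \<in> S" using S_mem ix u by simp
  show ?thesis unfolding sinv_def
  proof (rule the_equality)
    show "(ti x e, inv\<^bsub>G\<^esub> x) \<in> S \<and> Sm (Sm (e, x) (ti x e, inv\<^bsub>G\<^esub> x)) (e, x) = (e, x) \<and>
      Sm (Sm (ti x e, inv\<^bsub>G\<^esub> x) (e, x)) (ti x e, inv\<^bsub>G\<^esub> x) = (ti x e, inv\<^bsub>G\<^esub> x)"
      using cS c1 c2 by simp
  next
    fix b assume hb: "b \<in> S \<and> Sm (Sm (e, x) b) (e, x) = (e, x) \<and> Sm (Sm b (e, x)) b = b"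
    obtain g y where b: "b = (g, y)" by (cases b)
    have y: "y \<in> carrier G" and g: "g \<in> D y" "m g g = g" using hb b S_mem by auto
    have gA: "g \<in> A" using DA y g by auto
    have "x \<otimes>\<^bsub>G\<^esub> y \<otimes>\<^bsub>G\<^esub> x = x" using hb b Sm_simp by simp
    hence yx: "y = inv\<^bsub>G\<^esub> x" using x y
      by (metis G.inv_equality G.l_cancel_one' G.m_assoc G.m_closed)
    have gD: "g \<in> D (inv\<^bsub>G\<^esub> x)" using g yx by simp
    let ?h = "\<theta> x (m (ti x e) g)"
    have h: "?h = m e (\<theta> x g)" using th_hom[OF x u(1) gD] u by simp
    have hA: "?h \<in> A" using h closed eA DA[OF x th_in[OF x gD]] by simp
    have "Sm (e, x) b = (?h, \<one>\<^bsub>G\<^esub>)" using b yx Sm_simp x by simp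
    hence "m ?h e = e" using hb Sm_one[OF hA x e(1)] by simp
    hence "m e (\<theta> x g) = e" using h central[OF eA e(2)] DA[OF x th_in[OF x gD]] e(2) assoc eA
      by (metis)
    hence "\<theta> x (m (ti x e) g) = \<theta> x (ti x e)" using h u by simp
    moreover have "m (ti x e) g \<in> D (inv\<^bsub>G\<^esub> x)" using Dr[OF ix gA u(1)] .
    ultimately have ug: "m (ti x e) g = ti x e" using th_inj[OF x] u(1) by (meson inj_onD)
    have r: "ti (inv\<^bsub>G\<^esub> x) g \<in> D x" "\<theta> (inv\<^bsub>G\<^esub> x) (ti (inv\<^bsub>G\<^esub> x) g) = g"
      using thinv[OF ix gD] x by auto
    let ?k = "\<theta> (inv\<^bsub>G\<^esub> x) (m (ti (inv\<^bsub>G\<^esub> x) g) e)"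
    have k: "?k = m g (ti x e)" using th_hom[OF ix] r e tie x by simp
    have kA: "?k \<in> A" using k closed gA uA by simp
    have "Sm b (e, x) = (?k, \<one>\<^bsub>G\<^esub>)" using b yx Sm_simp x by simp
    hence "m ?k g = g" using hb b yx Sm_one[OF kA ix gD] by simp
    hence gu: "m g (ti x e) = g" using k central[OF gA g(2)] uA assoc gA g(2) by metis
    have "g = ti x e" using ug gu central[OF gA g(2) uA] by simp
    thus "b = (ti x e, inv\<^bsub>G\<^esub> x)" using b yx by simp
  qed
qed

lemma s_sinv: "(e, x) \<in> S \<Longrightarrow> Sm (e, x) (sinv S Sm (e, x)) = (e, x \<otimes>\<^bsub>G\<^esub> inv\<^bsub>G\<^esub> x)"
  using sinv_S Sm_simp S_mem ti_idem by simp
lemma sinv_s: "(e, x) \<in> S \<Longrightarrow> Sm (sinv S Sm (e, x)) (e, x) = (ti x e, inv\<^bsub>G\<^esub> x \<otimes>\<^bsub>G\<^esub> x)"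
proof -
  assume s: "(e, x) \<in> S"
  have x: "x \<in> carrier G" and e: "e \<in> D x" "m e e = e" using s S_mem by auto
  have ix: "inv\<^bsub>G\<^esub> x \<in> carrier G" using x by simp
  have tie: "ti x e = \<theta> (inv\<^bsub>G\<^esub> x) e" using thinv_idem[OF x e] .
  have tiinv: "ti (inv\<^bsub>G\<^esub> x) (ti x e) = e" using tie thinv_f[OF ix] e x by simp
  show ?thesis using sinv_S[OF s] Sm_simp tiinv e tie by simp
qed


definition nu :: "'g \<Rightarrow> ('a \<times> 'g) set" where "nu x = {s \<in> S. snd s = x}"
definition rho :: "(('a \<times> 'g) \<times> ('a \<times> 'g)) set" where
  "rho = {(s, t). s \<in> S \<and> t \<in> S \<and> snd s = snd t}"

lemma snd_Sm: "snd (Sm s t) = snd s \<otimes>\<^bsub>G\<^esub> snd t"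
  unfolding crossed_mult_def by simp

lemma S_snd: "s \<in> S \<Longrightarrow> snd s \<in> carrier G"
  unfolding crossed_carrier_def by auto

lemma idemA_ex: "x \<in> carrier G \<Longrightarrow> a \<in> D x \<Longrightarrow> (m a (sinv A m a), x) \<in> S"
  using S_mem Dr DA sinv_props aa'_idem by simp

lemma nu_ne: "x \<in> carrier G \<Longrightarrow> \<exists>e. (e, x) \<in> S"
  using Dne idemA_ex by blast

lemma nu_ne': "x \<in> carrier G \<Longrightarrow> \<exists>s. s \<in> nu x"
  using nu_ne unfolding nu_def by force

lemma rho_equiv: "equiv S rho"
  unfolding equiv_def refl_on_def sym_def trans_def rho_def by auto

lemma rho_cong: "sg_congruence S Sm rho"
  unfolding sg_congruence_def using rho_equiv
  by (auto simp: rho_def snd_Sm intro!: S_closed)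

lemma rho_class: "s \<in> S \<Longrightarrow> rho `` {s} = nu (snd s)"
  unfolding rho_def nu_def by auto

lemma nu_class: "x \<in> carrier G \<Longrightarrow> \<exists>s\<in>S. nu x = rho `` {s} \<and> snd s = x"
  using nu_ne rho_class by fastforce

lemma quot_carrier: "S // rho = nu ` carrier G"
proof
  show "S // rho \<subseteq> nu ` carrier G"
    unfolding quotient_def using rho_class S_snd by auto
  show "nu ` carrier G \<subseteq> S // rho"
    unfolding quotient_def using nu_class by blast
qed

abbreviation "Q \<equiv> quot_monoid S Sm rho"

lemma Q_mult: "x \<in> carrier G \<Longrightarrow> y \<in> carrier G \<Longrightarrow> nu x \<otimes>\<^bsub>Q\<^esub> nu y = nu (x \<otimes>\<^bsub>G\<^esub> y)"
proof -
  assume x: "x \<in> carrier G" and y: "y \<in> carrier G"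
  have a: "(SOME s. s \<in> nu x) \<in> nu x" using nu_ne'[OF x] by (rule someI_ex)
  have b: "(SOME s. s \<in> nu y) \<in> nu y" using nu_ne'[OF y] by (rule someI_ex)
  let ?p = "Sm (SOME s. s \<in> nu x) (SOME s. s \<in> nu y)"
  have "?p \<in> S" using a b S_closed unfolding nu_def by (metis (mono_tags, lifting) mem_Collect_eq prod.collapse)
  moreover have "snd ?p = x \<otimes>\<^bsub>G\<^esub> y" using a b snd_Sm unfolding nu_def by simp
  ultimately show ?thesis unfolding quot_monoid_def using rho_class by simp
qed

lemma idemS_snd: "s \<in> idems S Sm \<Longrightarrow> snd s = \<one>\<^bsub>G\<^esub>"
proof -
  assume "s \<in> idems S Sm"
  hence s: "s \<in> S" "Sm s s = s" unfolding idems_def by auto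
  hence "snd s \<otimes>\<^bsub>G\<^esub> snd s = snd s" using snd_Sm by metis
  thus ?thesis using S_snd[OF s(1)] by (metis G.l_cancel_one' G.m_closed)
qed

lemma idemS_ne: "\<exists>s. s \<in> idems S Sm"
proof -
  obtain a where a: "a \<in> A" using Dne[of "\<one>\<^bsub>G\<^esub>"] D1 by auto
  let ?e = "m a (sinv A m a)"
  have eS: "(?e, \<one>\<^bsub>G\<^esub>) \<in> S" using idemA_ex[of "\<one>\<^bsub>G\<^esub>" a] a D1 by simp
  have "Sm (?e, \<one>\<^bsub>G\<^esub>) (?e, \<one>\<^bsub>G\<^esub>) = (?e, \<one>\<^bsub>G\<^esub>)"
    using Sm_one eS S_mem D1 by simp
  thus ?thesis using eS unfolding idems_def by blast
qed

lemma Q_one: "\<one>\<^bsub>Q\<^esub> = nu \<one>\<^bsub>G\<^esub>"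
proof -
  have "(SOME e. e \<in> idems S Sm) \<in> idems S Sm" using idemS_ne by (rule someI_ex)
  moreover hence "(SOME e. e \<in> idems S Sm) \<in> S" unfolding idems_def by simp
  ultimately show ?thesis unfolding quot_monoid_def using rho_class idemS_snd by simp
qed

lemma Q_carrier: "carrier Q = nu ` carrier G"
  unfolding quot_monoid_def using quot_carrier by simp

lemma nu_inj: "inj_on nu (carrier G)"
proof (rule inj_onI)
  fix x y assume x: "x \<in> carrier G" and "y \<in> carrier G" "nu x = nu y"
  obtain s where "s \<in> nu x" using nu_ne'[OF x] by blast
  thus "x = y" using \<open>nu x = nu y\<close> unfolding nu_def by auto
qed

lemma Q_group: "group Q"
proof (rule groupI)
  fix X Y assume "X \<in> carrier Q" "Y \<in> carrier Q"
  then obtain x y where "x \<in> carrier G" "y \<in> carrier G" "X = nu x" "Y = nu y" using Q_carrier by auto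
  thus "X \<otimes>\<^bsub>Q\<^esub> Y \<in> carrier Q" using Q_mult Q_carrier by simp
next
  show "\<one>\<^bsub>Q\<^esub> \<in> carrier Q" using Q_one Q_carrier by simp
next
  fix X Y Z assume "X \<in> carrier Q" "Y \<in> carrier Q" "Z \<in> carrier Q"
  then obtain x y z where "x \<in> carrier G" "y \<in> carrier G" "z \<in> carrier G" "X = nu x" "Y = nu y" "Z = nu z"
    using Q_carrier by auto
  thus "X \<otimes>\<^bsub>Q\<^esub> Y \<otimes>\<^bsub>Q\<^esub> Z = X \<otimes>\<^bsub>Q\<^esub> (Y \<otimes>\<^bsub>Q\<^esub> Z)" using Q_mult G.m_assoc by simp
next
  fix X assume "X \<in> carrier Q"
  then obtain x where "x \<in> carrier G" "X = nu x" using Q_carrier by auto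
  thus "\<one>\<^bsub>Q\<^esub> \<otimes>\<^bsub>Q\<^esub> X = X" using Q_mult Q_one by simp
next
  fix X assume "X \<in> carrier Q"
  then obtain x where x: "x \<in> carrier G" "X = nu x" using Q_carrier by auto
  hence "nu (inv\<^bsub>G\<^esub> x) \<in> carrier Q \<and> nu (inv\<^bsub>G\<^esub> x) \<otimes>\<^bsub>Q\<^esub> X = \<one>\<^bsub>Q\<^esub>"
    using Q_mult Q_one Q_carrier by simp
  thus "\<exists>Y\<in>carrier Q. Y \<otimes>\<^bsub>Q\<^esub> X = \<one>\<^bsub>Q\<^esub>" by blast
qed

lemma rho_gc: "group_congruence S Sm rho"
  unfolding group_congruence_def using rho_cong Q_group by simp

lemma gc_idem:
  assumes gc: "group_congruence S Sm r" and i: "i \<in> S" "Sm i i = i"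
  shows "r `` {i} = \<one>\<^bsub>quot_monoid S Sm r\<^esub>"
proof -
  let ?Q = "quot_monoid S Sm r"
  have eq: "equiv S r" and cg: "\<forall>(s, t)\<in>r. \<forall>u\<in>S. (Sm s u, Sm t u) \<in> r \<and> (Sm u s, Sm u t) \<in> r"
    using gc unfolding group_congruence_def sg_congruence_def by auto
  interpret Q': group ?Q using gc unfolding group_congruence_def by simp
  let ?X = "r `` {i}"
  have Xc: "?X \<in> carrier ?Q" unfolding quot_monoid_def using i by (simp add: quotientI)
  have iX: "i \<in> ?X" using eq i equiv_class_self by fast
  have a: "(SOME s. s \<in> ?X) \<in> ?X" using iX by (rule someI)
  hence a': "(i, SOME s. s \<in> ?X) \<in> r" by simp
  hence aS: "(SOME s. s \<in> ?X) \<in> S" using eq unfolding equiv_def refl_on_def by auto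
  have "(Sm i i, Sm (SOME s. s \<in> ?X) i) \<in> r" using cg a' i by blast
  moreover have "(Sm (SOME s. s \<in> ?X) i, Sm (SOME s. s \<in> ?X) (SOME s. s \<in> ?X)) \<in> r"
    using cg a' aS by blast
  ultimately have "(i, Sm (SOME s. s \<in> ?X) (SOME s. s \<in> ?X)) \<in> r" using i eq
    unfolding equiv_def trans_def by metis
  hence "r `` {Sm (SOME s. s \<in> ?X) (SOME s. s \<in> ?X)} = ?X"
    using eq equiv_class_eq by (metis equiv_class_eq_iff)
  hence "?X \<otimes>\<^bsub>?Q\<^esub> ?X = ?X" unfolding quot_monoid_def by simp
  thus ?thesis using Xc Q'.l_cancel_one by blast
qed

lemma gc_sup:
  assumes gc: "group_congruence S Sm r"
  shows "rho \<subseteq> r"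
proof
  fix p assume "p \<in> rho"
  then obtain e x f where p: "p = ((e, x), (f, x))" and s: "(e, x) \<in> S" "(f, x) \<in> S"
    unfolding rho_def by auto
  have x: "x \<in> carrier G" and e: "e \<in> D x" "m e e = e" and f: "f \<in> D x" "m f f = f"
    using s S_mem by auto
  have eA: "e \<in> A" and fA: "f \<in> A" using e f DA x by auto
  have eq: "equiv S r" and cg: "\<forall>(s, t)\<in>r. \<forall>u\<in>S. (Sm s u, Sm t u) \<in> r \<and> (Sm u s, Sm u t) \<in> r"
    using gc unfolding group_congruence_def sg_congruence_def by auto
  let ?g = "m e f"
  have gA: "?g \<in> A" using closed eA fA by simp
  have gi: "m ?g ?g = ?g" using idem_mult eA fA e f by simp
  have S1: "(e, \<one>\<^bsub>G\<^esub>) \<in> S" "(f, \<one>\<^bsub>G\<^esub>) \<in> S" "(?g, \<one>\<^bsub>G\<^esub>) \<in> S"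
    using S_mem D1 eA fA gA e f gi by auto
  have I1: "Sm (e, \<one>\<^bsub>G\<^esub>) (e, \<one>\<^bsub>G\<^esub>) = (e, \<one>\<^bsub>G\<^esub>)" "Sm (f, \<one>\<^bsub>G\<^esub>) (f, \<one>\<^bsub>G\<^esub>) = (f, \<one>\<^bsub>G\<^esub>)"
    "Sm (?g, \<one>\<^bsub>G\<^esub>) (?g, \<one>\<^bsub>G\<^esub>) = (?g, \<one>\<^bsub>G\<^esub>)"
    using Sm_one eA fA gA D1 e f gi by auto
  have r1: "((e, \<one>\<^bsub>G\<^esub>), (?g, \<one>\<^bsub>G\<^esub>)) \<in> r" "((f, \<one>\<^bsub>G\<^esub>), (?g, \<one>\<^bsub>G\<^esub>)) \<in> r"
    using gc_idem[OF gc] S1 I1 eq by (metis eq_equiv_class_iff)+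
  have m1: "Sm (e, \<one>\<^bsub>G\<^esub>) (e, x) = (e, x)" "Sm (f, \<one>\<^bsub>G\<^esub>) (f, x) = (f, x)"
    using Sm_one eA fA x e f by auto
  have m2: "Sm (?g, \<one>\<^bsub>G\<^esub>) (e, x) = (?g, x)" "Sm (?g, \<one>\<^bsub>G\<^esub>) (f, x) = (?g, x)"
    using Sm_one[OF gA x] e f assoc eA fA central by (metis)+
  have "((e, x), (?g, x)) \<in> r" using cg r1(1) s(1) m1 m2 by fastforce
  moreover have "((f, x), (?g, x)) \<in> r" using cg r1(2) s(2) m1 m2 by fastforce
  ultimately show "p \<in> r" using p eq unfolding equiv_def sym_def trans_def by blast
qed

lemma sigma_eq: "min_group_congruence S Sm = rho"
  unfolding min_group_congruence_def using rho_gc gc_sup by blast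

lemma GS_eq: "max_group_image S Sm = Q"
  unfolding max_group_image_def sigma_eq ..

lemma nu_iso: "nu \<in> iso G Q"
proof -
  have "nu \<in> hom G Q" unfolding hom_def using Q_carrier Q_mult by auto
  moreover have "bij_betw nu (carrier G) (carrier Q)" using nu_inj Q_carrier by (simp add: bij_betw_def)
  ultimately show ?thesis unfolding iso_def by simp
qed


lemma alpha_ssinv: "s \<in> S \<Longrightarrow> LT_alpha (Sm s (sinv S Sm s)) = fst s"
  using s_sinv unfolding LT_alpha_def by (metis fst_conv prod.collapse)

lemma dom_eq: "x \<in> carrier G \<Longrightarrow> D x = TL_dom S Sm A m LT_alpha (nu x)"
proof -
  assume x: "x \<in> carrier G"
  have "TL_dom S Sm A m LT_alpha (nu x) = (\<Union>s\<in>nu x. comp_grp A m (fst s))"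
    unfolding TL_dom_def nu_def using alpha_ssinv by auto
  also have "\<dots> = D x"
  proof
    show "(\<Union>s\<in>nu x. comp_grp A m (fst s)) \<subseteq> D x"
    proof
      fix a assume "a \<in> (\<Union>s\<in>nu x. comp_grp A m (fst s))"
      then obtain e where e: "(e, x) \<in> S" and a: "a \<in> comp_grp A m e" unfolding nu_def by auto
      have aA: "a \<in> A" and ae: "m a (sinv A m a) = e" using a unfolding comp_grp_def by auto
      have "a = m e a" using sinv_props[OF aA] ae by simp
      thus "a \<in> D x" using Dr[OF x aA] e S_mem central DA x aA by (metis)
    qed
    show "D x \<subseteq> (\<Union>s\<in>nu x. comp_grp A m (fst s))"
    proof
      fix a assume a: "a \<in> D x"
      have aA: "a \<in> A" using DA x a by auto
      have "(m a (sinv A m a), x) \<in> nu x" using idemA_ex[OF x a] unfolding nu_def by simp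
      moreover have "a \<in> comp_grp A m (m a (sinv A m a))" unfolding comp_grp_def using aA aa'_eq by simp
      ultimately show "a \<in> (\<Union>s\<in>nu x. comp_grp A m (fst s))" by force
    qed
  qed
  finally show ?thesis by simp
qed

lemma theta_eq:
  assumes x: "x \<in> carrier G" and a: "a \<in> D (inv\<^bsub>G\<^esub> x)"
  shows "\<theta> x a = TL_theta S Sm A m LT_alpha (LT_lambda G m D \<theta>) (nu x) a"
proof -
  have ix: "inv\<^bsub>G\<^esub> x \<in> carrier G" using x by simp
  have aA: "a \<in> A" using DA ix a by auto
  let ?f = "m a (sinv A m a)"
  have fD: "?f \<in> D (inv\<^bsub>G\<^esub> x)" using Dr[OF ix] a aA sinv_props by simp
  have fi: "m ?f ?f = ?f" using aa'_idem aA by simp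
  let ?e = "\<theta> x ?f"
  have eD: "?e \<in> D x" using th_in[OF x fD] .
  have ei: "m ?e ?e = ?e" using th_hom[OF x fD fD] fi by simp
  have eS: "(?e, x) \<in> S" using S_mem x eD ei by simp
  have tif: "ti x ?e = ?f" using thinv_f[OF x fD] .
  have "(THE s. s \<in> nu x \<and> LT_alpha (Sm (sinv S Sm s) s) = ?f) = (?e, x)"
  proof (rule the_equality)
    show "(?e, x) \<in> nu x \<and> LT_alpha (Sm (sinv S Sm (?e, x)) (?e, x)) = ?f"
      using eS sinv_s[OF eS] tif unfolding nu_def LT_alpha_def by simp
  next
    fix s assume h: "s \<in> nu x \<and> LT_alpha (Sm (sinv S Sm s) s) = ?f"
    then obtain e where s: "s = (e, x)" "(e, x) \<in> S" unfolding nu_def by (cases s) auto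
    hence "ti x e = ?f" using h sinv_s unfolding LT_alpha_def by simp
    hence "\<theta> x (ti x e) = ?e" by simp
    moreover have "\<theta> x (ti x e) = e" using thinv x s S_mem by simp
    ultimately show "s = (?e, x)" using s by simp
  qed
  hence "TL_theta S Sm A m LT_alpha (LT_lambda G m D \<theta>) (nu x) a = LT_lambda G m D \<theta> (?e, x) a"
    unfolding TL_theta_def by simp
  also have "\<dots> = \<theta> x a" unfolding LT_lambda_def using tif sinv_props[OF aA] by simp
  finally show ?thesis by simp
qed

lemma sel_eq:
  assumes z: "z \<in> carrier G" and a: "a \<in> D z"
  shows "(THE s. s \<in> nu z \<and> LT_alpha (Sm s (sinv S Sm s)) = m a (sinv A m a)) = (m a (sinv A m a), z)"
proof (rule the_equality)
  have "(m a (sinv A m a), z) \<in> S" using idemA_ex[OF z a] .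
  thus "(m a (sinv A m a), z) \<in> nu z \<and> LT_alpha (Sm (m a (sinv A m a), z) (sinv S Sm (m a (sinv A m a), z))) = m a (sinv A m a)"
    using alpha_ssinv unfolding nu_def by fastforce
next
  fix s assume "s \<in> nu z \<and> LT_alpha (Sm s (sinv S Sm s)) = m a (sinv A m a)"
  thus "s = (m a (sinv A m a), z)" using alpha_ssinv unfolding nu_def by (cases s) auto
qed

lemma w_eq:
  assumes x: "x \<in> carrier G" and y: "y \<in> carrier G"
  shows "mult_eq_on (setmul m (D x) (D (x \<otimes>\<^bsub>G\<^esub> y))) (w x y)
           (TL_w S Sm A m LT_alpha (LT_f G m D \<theta> w) (nu x) (nu y))"
  unfolding mult_eq_on_def
proof
  let ?T = "setmul m (D x) (D (x \<otimes>\<^bsub>G\<^esub> y))"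
  fix a assume aT: "a \<in> ?T"
  have xy: "x \<otimes>\<^bsub>G\<^esub> y \<in> carrier G" using x y by simp
  have ix: "inv\<^bsub>G\<^esub> x \<in> carrier G" using x by simp
  have TA: "?T \<subseteq> A" using setmul_sub DsubA x xy by simp
  have aA: "a \<in> A" using aT TA by auto
  have axD: "a \<in> D x" and axyD: "a \<in> D (x \<otimes>\<^bsub>G\<^esub> y)"
    using aT Dl Dr DA x xy unfolding setmul_def by auto
  let ?e = "m a (sinv A m a)"
  have eS: "(?e, x) \<in> S" using idemA_ex[OF x axD] .
  have eD: "?e \<in> D x" and ei: "m ?e ?e = ?e" using eS S_mem by auto
  have eD2: "?e \<in> D (x \<otimes>\<^bsub>G\<^esub> y)" using idemA_ex[OF xy axyD] S_mem by simp
  have eT: "?e \<in> ?T" using setmulI[OF eD eD2] ei by simp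
  have eA: "?e \<in> A" using DA x eD by auto
  note u = ti_idem[OF x eD ei]
  have tie: "ti x ?e = \<theta> (inv\<^bsub>G\<^esub> x) ?e" using thinv_idem[OF x eD ei] .
  have tiinv: "ti (inv\<^bsub>G\<^esub> x) (ti x ?e) = ?e" using tie thinv_f[OF ix] eD x by simp
  have yy: "inv\<^bsub>G\<^esub> x \<otimes>\<^bsub>G\<^esub> (x \<otimes>\<^bsub>G\<^esub> y) = y" using x y by (simp add: G.m_assoc[symmetric])
  have prod: "Sm (sinv S Sm (?e, x)) (?e, x \<otimes>\<^bsub>G\<^esub> y) = (ti x ?e, y)"
    using sinv_S[OF eS] Sm_simp tiinv ei tie yy by simp
  have coef: "LT_f G m D \<theta> w (?e, x) (ti x ?e, y) = snd (w x y) ?e"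
    unfolding LT_f_def using u by simp
  have Xm: "nu x \<otimes>\<^bsub>max_group_image S Sm\<^esub> nu y = nu (x \<otimes>\<^bsub>G\<^esub> y)" using GS_eq Q_mult x y by simp
  have wm: "is_multiplier ?T m (w x y)" using unit[OF x y] unfolding is_unit_multiplier_def by blast
  have LR: "fst (w x y) ?e = snd (w x y) ?e" using LeqR[OF wm TA eT ei] .
  have a1: "a = m ?e a" using sinv_props[OF aA] by simp
  have a2: "a = m a ?e" using sinv_props[OF aA] aa'_eq[OF aA] assoc aA by metis
  have f1: "fst (TL_w S Sm A m LT_alpha (LT_f G m D \<theta> w) (nu x) (nu y)) a = m (snd (w x y) ?e) a"
    by (simp add: TL_w_def Let_def Xm sel_eq[OF x axD] sel_eq[OF xy axyD] prod coef)
  have f2: "snd (TL_w S Sm A m LT_alpha (LT_f G m D \<theta> w) (nu x) (nu y)) a = m a (snd (w x y) ?e)"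
    by (simp add: TL_w_def Let_def Xm sel_eq[OF x axD] sel_eq[OF xy axyD] prod coef)
  have "fst (w x y) a = m (fst (w x y) ?e) a"
    using wm eT aT a1 unfolding is_multiplier_def by metis
  moreover have "snd (w x y) a = m a (snd (w x y) ?e)"
    using wm eT aT a2 unfolding is_multiplier_def by metis
  ultimately show "fst (w x y) a = fst (TL_w S Sm A m LT_alpha (LT_f G m D \<theta> w) (nu x) (nu y)) a \<and>
         snd (w x y) a = snd (TL_w S Sm A m LT_alpha (LT_f G m D \<theta> w) (nu x) (nu y)) a"
    using f1 f2 LR by simp
qed

end

theorem proposition9p2:
  fixes G :: "('g, 'b) monoid_scheme"
    and A :: "'a set" and m :: "'a \<Rightarrow> 'a \<Rightarrow> 'a"
    and D :: "'g \<Rightarrow> 'a set" and \<theta> :: "'g \<Rightarrow> 'a \<Rightarrow> 'a"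
    and w :: "'g \<Rightarrow> 'g \<Rightarrow> 'a multiplier"
  assumes "group G"
    and "semilattice_of_groups A m"
    and "twisted_partial_action G A m D \<theta> w"
  shows "\<exists>\<nu>. \<nu> \<in> iso G (max_group_image (crossed_carrier G A m D) (crossed_mult G m D \<theta>)) \<and>
           (\<forall>x\<in>carrier G.
              D x = TL_dom (crossed_carrier G A m D) (crossed_mult G m D \<theta>) A m LT_alpha (\<nu> x) \<and>
              (\<forall>a\<in>D (inv\<^bsub>G\<^esub> x).
                 \<theta> x a = TL_theta (crossed_carrier G A m D) (crossed_mult G m D \<theta>) A m LT_alpha
                             (LT_lambda G m D \<theta>) (\<nu> x) a)) \<and>
           (\<forall>x\<in>carrier G. \<forall>y\<in>carrier G.
              mult_eq_on (setmul m (D x) (D (x \<otimes>\<^bsub>G\<^esub> y))) (w x y)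
                (TL_w (crossed_carrier G A m D) (crossed_mult G m D \<theta>) A m LT_alpha
                   (LT_f G m D \<theta> w) (\<nu> x) (\<nu> y)))"
proof -
  interpret T: tpa G A m D \<theta> w by (rule tpa.intro) (rule assms)+
  show ?thesis
    apply (rule exI[of _ T.nu])
    apply (intro conjI ballI)
    subgoal using T.GS_eq T.nu_iso by simp
    subgoal for x using T.dom_eq by blast
    subgoal for x a using T.theta_eq by blast
    subgoal for x y using T.w_eq by blast
    done
qed

end
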